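(* Fix $N\in\mathbb N$ and $p\in\mathbb N$. Let $X_k^\star=\sum_{j=-2}^{N-1}x_k^{j,\star}\phi^j$ be the optimal state of the stochastic LQ problem described in the context, where $x^{j,\star}$ is the optimal state trajectory of the coefficient problem $\mathcal P_j$, and define the moving-horizon truncation $X_k^{\mathrm{trun},\star}:=\sum_{j\in\{-2,-1\}\cup\{\max(0,k-p),\dots,k-1\}}x_k^{j,\star}\phi^j$. Then for $k\in\{0,\dots,N-1\}$ the truncation error $\Delta X_k(p+2):=X_k^\star-X_k^{\mathrm{trun},\star}$ satisfies $$\Delta X_k(p+2)=\begin{cases}0, & k\le p,\\ \sum_{j=0}^{k-p-1}\bar A_{j+1}^{k-1}Ew^0\phi^j, & \text{otherwise}.\end{cases}$$
   Context: Matrices $A\in\mathbb R^{n_x\times n_x}$, $B\in\mathbb R^{n_x\times n_u}$, $E\in\mathbb R^{n_x\times1}$; $Q_N,Q\succeq0$, $R\succ0$; $(A,B)$ stabilizable, $(A,Q^{1/2})$ detectable. There are independent random variables $\xi_{\mathrm{ini}},\xi_0,\xi_1,\dots$ ($\xi_0,\xi_1,\dots$ i.i.d.) and real functions $\varphi^1,\psi^1$ such that $\phi^{-2}:=1$, $\phi^{-1}:=\varphi^1(\xi_{\mathrm{ini}})$, $\phi^j:=\psi^1(\xi_j)$ ($j\ge0$) have zero mean and finite nonzero second moment for $j\ge-1$. The system is $X_{k+1}=AX_k+BU_k+EW_k$, $X_0=X_{\mathrm{ini}}=x^{-2}_{\mathrm{ini}}+x^{-1}_{\mathrm{ini}}\phi^{-1}$,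 with scalar i.i.d. disturbances $W_k=\mathbb E[W]+w^0\phi^k$, $w^0\in\mathbb R$; inputs $U_k$ are square integrable and measurable w.r.t. $\sigma(X_i,i\le k)$; the stochastic LQ problem minimizes $\mathbb E[X_N^\top Q_NX_N]+\sum_{k=0}^{N-1}\mathbb E[X_k^\top QX_k+U_k^\top RU_k]$. Coefficient problem $\mathcal P_j$ ($j\in\{-2,\dots,N-1\}$): minimize $x_N^{j\top}Q_Nx_N^j+\sum_{k=0}^{N-1}(x_k^{j\top}Qx_k^j+u_k^{j\top}Ru_k^j)$ s.t. $x^j_{k+1}=Ax^j_k+Bu^j_k+Ew^j_k$, $x^j_0=x^j_{\mathrm{ini}}$ ($x^j_{\mathrm{ini}}=0$ for $j\ge0$), and $u^j_k=0$ for $k\le j$ when $j\ge 0$, where $w^{-2}_k=\mathbb E[W]$, $w^{-1}_k=0$, $w^j_k=w^0$ if $k=j$ and $0$ otherwise for $j\ge0$. Riccati recursion: $P_0=Q_N$, and for $k\ge1$: $K_k=-(R+B^\top P_{k-1}B)^{-1}B^\top P_{k-1}A$, $P_k=Q+A^\top(P_{k-1}-P_{k-1}B(R+B^\top P_{k-1}B)^{-1}B^\top P_{k-1})A$. For integers $k_1,k_2$: $\bar A_{k_1}^{k_2}:=(A+BK_{N-k_2})\cdots(A+BK_{N-k_1})$ (larger $k$ to the left) if $0\le k_1\le k_2$, and $I$ otherwise. *)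

theory Defs
  imports "HOL-Analysis.Analysis"
begin

definition psd :: "real^'n^'n \<Rightarrow> bool" where
  "psd M \<longleftrightarrow> transpose M = M \<and> (\<forall>x. 0 \<le> x \<bullet> (M *v x))"

definition pd :: "real^'n^'n \<Rightarrow> bool" where
  "pd M \<longleftrightarrow> transpose M = M \<and> (\<forall>x. x \<noteq> 0 \<longrightarrow> 0 < x \<bullet> (M *v x))"

definition msqrt :: "real^'n^'n \<Rightarrow> real^'n^'n" where
  "msqrt M = (SOME S. psd S \<and> S ** S = M)"

primrec mpow :: "real^'n^'n \<Rightarrow> nat \<Rightarrow> real^'n^'n" where
  "mpow M 0 = mat 1"
| "mpow M (Suc t) = M ** mpow M t"

definition schur_stable :: "real^'n^'n \<Rightarrow> bool" where
  "schur_stable M \<longleftrightarrow> (\<forall>x. (\<lambda>t. mpow M t *v x) \<longlonglongrightarrow> 0)"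

definition stabilizable :: "real^'n^'n \<Rightarrow> real^'m^'n \<Rightarrow> bool" where
  "stabilizable A B \<longleftrightarrow> (\<exists>K::real^'n^'m. schur_stable (A + B ** K))"

definition detectable :: "real^'n^'n \<Rightarrow> real^'n^'p \<Rightarrow> bool" where
  "detectable A C \<longleftrightarrow> (\<exists>L::real^'p^'n. schur_stable (A + L ** C))"

primrec ric_P :: "real^'n^'n \<Rightarrow> real^'m^'n \<Rightarrow> real^'n^'n \<Rightarrow> real^'m^'m \<Rightarrow> real^'n^'n
                   \<Rightarrow> nat \<Rightarrow> real^'n^'n" where
  "ric_P A B Q R QN 0 = QN"
| "ric_P A B Q R QN (Suc k) =
     (let P = ric_P A B Q R QN k in
      Q + transpose A ** (P - P ** B ** matrix_inv (R + transpose B ** P ** B) ** transpose B ** P) ** A)"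

(* gain K_k for k \<ge> 1 (uses P_{k-1}) *)
definition ric_K :: "real^'n^'n \<Rightarrow> real^'m^'n \<Rightarrow> real^'n^'n \<Rightarrow> real^'m^'m \<Rightarrow> real^'n^'n
                   \<Rightarrow> nat \<Rightarrow> real^'n^'m" where
  "ric_K A B Q R QN k =
     (let P = ric_P A B Q R QN (k - 1) in
      - (matrix_inv (R + transpose B ** P ** B) ** transpose B ** P ** A))"

(* \<bar>A_{k1}^{k2} = (A + B K_{N-k2}) \<cdots> (A + B K_{N-k1}) if 0 \<le> k1 \<le> k2, else I *)
definition Abar :: "real^'n^'n \<Rightarrow> real^'m^'n \<Rightarrow> real^'n^'n \<Rightarrow> real^'m^'m \<Rightarrow> real^'n^'n
                   \<Rightarrow> nat \<Rightarrow> int \<Rightarrow> int \<Rightarrow> real^'n^'n" where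
  "Abar A B Q R QN N k1 k2 =
     (if 0 \<le> k1 \<and> k1 \<le> k2
      then fold (\<lambda>k M. (A + B ** ric_K A B Q R QN (nat (int N - k))) ** M) [k1..k2] (mat 1)
      else mat 1)"

definition wcoef :: "real \<Rightarrow> real \<Rightarrow> int \<Rightarrow> nat \<Rightarrow> real" where
  "wcoef EW w0 j k = (if j = -2 then EW else if j = -1 then 0
                      else if int k = j then w0 else 0)"

definition xini :: "real^'n \<Rightarrow> real^'n \<Rightarrow> int \<Rightarrow> real^'n" where
  "xini x2 x1 j = (if j = -2 then x2 else if j = -1 then x1 else 0)"

definition coef_feasible ::
  "real^'n^'n \<Rightarrow> real^'m^'n \<Rightarrow> real^'n \<Rightarrow> nat \<Rightarrow> real^'n \<Rightarrow> real^'n \<Rightarrow> real \<Rightarrow> real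
   \<Rightarrow> int \<Rightarrow> (nat \<Rightarrow> real^'n) \<Rightarrow> (nat \<Rightarrow> real^'m) \<Rightarrow> bool" where
  "coef_feasible A B E N x2 x1 EW w0 j x u \<longleftrightarrow>
     x 0 = xini x2 x1 j \<and>
     (\<forall>k<N. x (Suc k) = A *v x k + B *v u k + wcoef EW w0 j k *\<^sub>R E) \<and>
     (0 \<le> j \<longrightarrow> (\<forall>k<N. int k \<le> j \<longrightarrow> u k = 0))"

definition coef_cost ::
  "real^'n^'n \<Rightarrow> real^'n^'n \<Rightarrow> real^'m^'m \<Rightarrow> nat \<Rightarrow> (nat \<Rightarrow> real^'n) \<Rightarrow> (nat \<Rightarrow> real^'m) \<Rightarrow> real" where
  "coef_cost QN Q R N x u =
     x N \<bullet> (QN *v x N) + (\<Sum>k<N. x k \<bullet> (Q *v x k) + u k \<bullet> (R *v u k))"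

definition coef_optimal ::
  "real^'n^'n \<Rightarrow> real^'m^'n \<Rightarrow> real^'n \<Rightarrow> real^'n^'n \<Rightarrow> real^'n^'n \<Rightarrow> real^'m^'m \<Rightarrow> nat
   \<Rightarrow> real^'n \<Rightarrow> real^'n \<Rightarrow> real \<Rightarrow> real
   \<Rightarrow> int \<Rightarrow> (nat \<Rightarrow> real^'n) \<Rightarrow> (nat \<Rightarrow> real^'m) \<Rightarrow> bool" where
  "coef_optimal A B E QN Q R N x2 x1 EW w0 j x u \<longleftrightarrow>
     coef_feasible A B E N x2 x1 EW w0 j x u \<and>
     (\<forall>x' u'. coef_feasible A B E N x2 x1 EW w0 j x' u' \<longrightarrow>
        coef_cost QN Q R N x u \<le> coef_cost QN Q R N x' u')"

end

theory Submission
  imports Defs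
begin

lemma adj: "((A::real^'n^'m) *v x) \<bullet> y = x \<bullet> (transpose A *v y)"
  by (metis dot_lmul_matrix inner_commute transpose_matrix_vector)

lemma transpose_add: "transpose (X + Y) = transpose X + transpose (Y::real^'n^'m)"
  by (simp add: transpose_def vec_eq_iff)

lemma transpose_diff: "transpose (X - Y) = transpose X - transpose (Y::real^'n^'m)"
  by (simp add: transpose_def vec_eq_iff)

lemma mvneg: "(- M) *v x = - (M *v (x::real^'n))"
  by (simp add: vec_eq_iff matrix_vector_mult_def sum_negf)

lemma minv:
  fixes M :: "real^'n^'n"
  assumes "invertible M"
  shows "M ** matrix_inv M = mat 1" "matrix_inv M ** M = mat 1"
proof -
  have "\<exists>A'. M ** A' = mat 1 \<and> A' ** M = mat 1" using assms invertible_def by blast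
  then have "M ** matrix_inv M = mat 1 \<and> matrix_inv M ** M = mat 1"
    unfolding matrix_inv_def by (rule someI_ex)
  then show "M ** matrix_inv M = mat 1" "matrix_inv M ** M = mat 1" by auto
qed

lemma minv_sym:
  fixes M :: "real^'n^'n"
  assumes "invertible M" "transpose M = M"
  shows "transpose (matrix_inv M) = matrix_inv M"
proof -
  have "transpose (matrix_inv M) ** M = mat 1"
    by (metis assms matrix_transpose_mul minv(1) transpose_mat)
  then have "transpose (matrix_inv M) = transpose (matrix_inv M) ** (M ** matrix_inv M)"
    using minv(1)[OF assms(1)] by (simp add: matrix_mul_rid)
  also have "\<dots> = matrix_inv M" 
    by (simp add: matrix_mul_assoc \<open>transpose (matrix_inv M) ** M = mat 1\<close> matrix_mul_lid)
  finally show ?thesis .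
qed

lemma step_id:
  fixes A::"real^'n^'n" and B::"real^'m^'n" and Q P' ::"real^'n^'n" and R::"real^'m^'m"
  assumes sP: "transpose P' = P'" and sR: "transpose R = R"
    and inv: "invertible (R + transpose B ** P' ** B)"
  defines "M \<equiv> R + transpose B ** P' ** B"
  defines "K \<equiv> - (matrix_inv M ** transpose B ** P' ** A)"
  defines "P \<equiv> Q + transpose A ** (P' - P' ** B ** matrix_inv M ** transpose B ** P') ** A"
  shows "x \<bullet> (Q *v x) + u \<bullet> (R *v u) + (A *v x + B *v u) \<bullet> (P' *v (A *v x + B *v u))
     = x \<bullet> (P *v x) + (u - K *v x) \<bullet> (M *v (u - K *v x))"
proof -
  define Mi where "Mi = matrix_inv M"
  define a where "a = A *v x"
  define z where "z = transpose B *v (P' *v a)"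
  define w where "w = Mi *v z"
  have sM: "transpose M = M" unfolding M_def using sP sR
    by (simp add: transpose_add matrix_transpose_mul matrix_mul_assoc)
  have MMi: "M ** Mi = mat 1" using minv(1)[OF inv] by (simp add: M_def Mi_def)
  have Kx: "K *v x = - w"
    unfolding K_def w_def z_def a_def Mi_def
    by (simp add: matrix_vector_mul_assoc mvneg matrix_mul_assoc)
  have Px: "P *v x = Q *v x + transpose A *v (P' *v a - P' *v (B *v w))"
    unfolding P_def a_def w_def z_def Mi_def
    by (simp add: matrix_vector_mul_assoc[symmetric] matrix_vector_mult_add_rdistrib matrix_vector_mult_diff_rdistrib matrix_vector_mult_diff_distrib)
  have e1: "\<And>v. x \<bullet> (transpose A *v v) = a \<bullet> v" by (simp add: a_def adj)
  have e2: "\<And>v. (B *v v) \<bullet> (P' *v a) = v \<bullet> z" by (simp add: adj z_def)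
  have e3: "\<And>v. a \<bullet> (P' *v (B *v v)) = v \<bullet> z"
    by (metis adj e2 inner_commute sP)
  have e5: "M *v w = z" by (simp add: w_def matrix_vector_mul_assoc MMi)
  have e6a: "u \<bullet> (M *v w) = u \<bullet> z" using e5 by simp
  have e6b: "w \<bullet> (M *v u) = u \<bullet> z" by (metis adj e5 inner_commute sM)
  have e7: "u \<bullet> (M *v u) = u \<bullet> (R *v u) + (B *v u) \<bullet> (P' *v (B *v u))"
    unfolding M_def
    by (simp add: matrix_vector_mult_add_rdistrib inner_add_right adj matrix_vector_mul_assoc matrix_mul_assoc)
  have "(u - K *v x) \<bullet> (M *v (u - K *v x)) = (u + w) \<bullet> (M *v (u + w))" by (simp add: Kx)
  also have "\<dots> = u \<bullet> (M *v u) + u \<bullet> (M *v w) + w \<bullet> (M *v u) + w \<bullet> (M *v w)"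
    by (simp add: matrix_vector_right_distrib inner_add_left inner_add_right)
  also have "\<dots> = u \<bullet> (R *v u) + (B *v u) \<bullet> (P' *v (B *v u)) + 2 * (u \<bullet> z) + w \<bullet> z"
    using e7 e6a e6b e5 by (simp add: inner_commute)
  finally have r1: "(u - K *v x) \<bullet> (M *v (u - K *v x)) = u \<bullet> (R *v u) + (B *v u) \<bullet> (P' *v (B *v u)) + 2 * (u \<bullet> z) + w \<bullet> z" .
  have r2: "x \<bullet> (P *v x) = x \<bullet> (Q *v x) + a \<bullet> (P' *v a) - w \<bullet> z"
    unfolding Px inner_add_right e1 inner_diff_right e3 by (simp add: inner_commute)
  have r3: "(A *v x + B *v u) \<bullet> (P' *v (A *v x + B *v u)) = a \<bullet> (P' *v a) + 2 * (u \<bullet> z) + (B *v u) \<bullet> (P' *v (B *v u))"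
    unfolding a_def[symmetric]
    by (simp add: matrix_vector_right_distrib inner_add_left inner_add_right e2 e3)
  show ?thesis using r1 r2 r3 by simp
qed

lemma M_inv:
  fixes B::"real^'m^'n" and P' ::"real^'n^'n" and R::"real^'m^'m"
  assumes "psd P'" "pd R"
  shows "invertible (R + transpose B ** P' ** B)" "psd (R + transpose B ** P' ** B)" "pd (R + transpose B ** P' ** B)"
proof -
  let ?M = "R + transpose B ** P' ** B"
  have q: "x \<bullet> (?M *v x) = x \<bullet> (R *v x) + (B *v x) \<bullet> (P' *v (B *v x))" for x
    by (simp add: matrix_vector_mult_add_rdistrib inner_add_right adj matrix_vector_mul_assoc matrix_mul_assoc)
  have pos: "x \<noteq> 0 \<Longrightarrow> 0 < x \<bullet> (?M *v x)" for x
    using assms q[of x] unfolding psd_def pd_def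
    by (metis add_pos_nonneg)
  have "\<forall>x. ?M *v x = 0 \<longrightarrow> x = 0"
    using pos by (metis inner_zero_right less_irrefl)
  then show "invertible ?M"
    using matrix_left_invertible_ker invertible_left_inverse by blast
  have "transpose ?M = ?M" using assms unfolding psd_def pd_def
    by (simp add: transpose_add matrix_transpose_mul matrix_mul_assoc)
  moreover have "0 \<le> x \<bullet> (?M *v x)" for x
    using pos[of x] by (cases "x = 0") auto
  ultimately show "psd ?M" unfolding psd_def by blast
  show "pd ?M" unfolding pd_def using pos \<open>transpose ?M = ?M\<close> by blast
qed

lemma ric_psd:
  fixes A::"real^'n^'n" and B::"real^'m^'n" and Q QN ::"real^'n^'n" and R::"real^'m^'m"
  assumes "psd QN" "psd Q" "pd R"
  shows "psd (ric_P A B Q R QN k)"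
proof (induction k)
  case 0
  then show ?case using assms by simp
next
  case (Suc k)
  define P' where "P' = ric_P A B Q R QN k"
  have inv: "invertible (R + transpose B ** P' ** B)"
    using M_inv(1) Suc assms(3) P'_def by blast
  have sP: "transpose P' = P'" using Suc P'_def psd_def by blast
  have sR: "transpose R = R" using assms(3) pd_def by blast
  have sQ: "transpose Q = Q" using assms(2) psd_def by blast
  have sM: "transpose (R + transpose B ** P' ** B) = R + transpose B ** P' ** B"
    using sP sR by (simp add: transpose_add matrix_transpose_mul matrix_mul_assoc)
  have sMi: "transpose (matrix_inv (R + transpose B ** P' ** B)) = matrix_inv (R + transpose B ** P' ** B)"
    using minv_sym[OF inv sM] .
  have Pdef: "ric_P A B Q R QN (Suc k) = Q + transpose A ** (P' - P' ** B ** matrix_inv (R + transpose B ** P' ** B) ** transpose B ** P') ** A"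
    by (simp add: P'_def Let_def)
  have sym: "transpose (ric_P A B Q R QN (Suc k)) = ric_P A B Q R QN (Suc k)"
    unfolding Pdef using sQ sP sMi
    by (simp add: transpose_add transpose_diff matrix_transpose_mul matrix_mul_assoc)
  have nn: "0 \<le> x \<bullet> (ric_P A B Q R QN (Suc k) *v x)" for x
  proof -
    define K where "K = - (matrix_inv (R + transpose B ** P' ** B) ** transpose B ** P' ** A)"
    have id: "x \<bullet> (Q *v x) + (K *v x) \<bullet> (R *v (K *v x)) + (A *v x + B *v (K *v x)) \<bullet> (P' *v (A *v x + B *v (K *v x)))
      = x \<bullet> (ric_P A B Q R QN (Suc k) *v x) + (K *v x - K *v x) \<bullet> ((R + transpose B ** P' ** B) *v (K *v x - K *v x))"
      unfolding Pdef K_def by (rule step_id[OF sP sR inv])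
    have "0 \<le> x \<bullet> (Q *v x)" using assms(2) psd_def by blast
    moreover have "0 \<le> (K *v x) \<bullet> (R *v (K *v x))" using assms(3) unfolding pd_def
      by (metis inner_zero_left less_eq_real_def)
    moreover have "0 \<le> (A *v x + B *v (K *v x)) \<bullet> (P' *v (A *v x + B *v (K *v x)))"
      using Suc P'_def psd_def by blast
    ultimately show ?thesis using id by simp
  qed
  show ?case unfolding psd_def using sym nn by blast
qed

definition Mm where "Mm A B Q R QN m = R + transpose B ** ric_P A B Q R QN m ** B"

definition sqc where "sqc A B Q R QN N x u t =
   (u t - ric_K A B Q R QN (N - t) *v x t) \<bullet> (Mm A B Q R QN (N - Suc t) *v (u t - ric_K A B Q R QN (N - t) *v x t))"

lemma ctg:
  fixes A::"real^'n^'n" and B::"real^'m^'n" and Q QN ::"real^'n^'n" and R::"real^'m^'m"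
    and x :: "nat \<Rightarrow> real^'n" and u :: "nat \<Rightarrow> real^'m"
  assumes "psd QN" "psd Q" "pd R"
    and dyn: "\<And>t. s \<le> t \<Longrightarrow> t < N \<Longrightarrow> x (Suc t) = A *v x t + B *v u t" and "s \<le> N"
  shows "x N \<bullet> (QN *v x N) + (\<Sum>t\<in>{s..<N}. x t \<bullet> (Q *v x t) + u t \<bullet> (R *v u t))
     = x s \<bullet> (ric_P A B Q R QN (N - s) *v x s) + (\<Sum>t\<in>{s..<N}. sqc A B Q R QN N x u t)"
  using dyn \<open>s \<le> N\<close>
proof (induction "N - s" arbitrary: s)
  case 0
  then show ?case by simp
next
  case (Suc d)
  then have sN: "s < N" by simp
  define m where "m = N - Suc s"
  have m1: "N - s = Suc m" using sN m_def by simp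
  have IH: "x N \<bullet> (QN *v x N) + (\<Sum>t\<in>{Suc s..<N}. x t \<bullet> (Q *v x t) + u t \<bullet> (R *v u t))
     = x (Suc s) \<bullet> (ric_P A B Q R QN m *v x (Suc s)) + (\<Sum>t\<in>{Suc s..<N}. sqc A B Q R QN N x u t)"
    using Suc.hyps(1)[of "Suc s"] Suc.hyps(2) Suc.prems sN m_def by simp
  have P'psd: "psd (ric_P A B Q R QN m)" using ric_psd assms(1-3) by blast
  have sP: "transpose (ric_P A B Q R QN m) = ric_P A B Q R QN m" using P'psd psd_def by blast
  have sR: "transpose R = R" using assms(3) pd_def by blast
  have inv: "invertible (R + transpose B ** ric_P A B Q R QN m ** B)" using M_inv(1) P'psd assms(3) by blast
  have st: "x s \<bullet> (Q *v x s) + u s \<bullet> (R *v u s) + x (Suc s) \<bullet> (ric_P A B Q R QN m *v x (Suc s))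
     = x s \<bullet> (ric_P A B Q R QN (N - s) *v x s) + sqc A B Q R QN N x u s"
    unfolding Suc.prems(1)[OF order.refl sN] m1 sqc_def Mm_def m_def[symmetric]
    by (simp add: Let_def ric_K_def step_id[OF sP sR inv])
  show ?case
    using IH st sN by (simp add: sum.atLeast_Suc_lessThan)
qed

lemma abar_step:
  assumes "0 \<le> k1" "k1 \<le> k2"
  shows "Abar A B Q R QN N k1 k2 = (A + B ** ric_K A B Q R QN (nat (int N - k2))) ** Abar A B Q R QN N k1 (k2 - 1)"
proof -
  have "fold (\<lambda>k M. (A + B ** ric_K A B Q R QN (nat (int N - k))) ** M) [k1..k2 - 1] (mat 1) = Abar A B Q R QN N k1 (k2 - 1)"
    unfolding Abar_def using assms by auto
  then show ?thesis
    unfolding Abar_def using assms by (simp add: upto_rec2)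
qed

primrec fbx where
  "fbx A B Q R QN N jn w0 E 0 = 0"
| "fbx A B Q R QN N jn w0 E (Suc t) = (if t < jn then 0 else if t = jn then w0 *\<^sub>R E
      else (A + B ** ric_K A B Q R QN (N - t)) *v fbx A B Q R QN N jn w0 E t)"

lemma feas_cost:
  fixes A::"real^'n^'n" and B::"real^'m^'n" and Q QN ::"real^'n^'n" and R::"real^'m^'m"
    and x :: "nat \<Rightarrow> real^'n" and u :: "nat \<Rightarrow> real^'m"
  assumes "psd QN" "psd Q" "pd R" "jn < N"
    and feas: "coef_feasible A B E N x2 x1 EW w0 (int jn) x u"
  shows "\<forall>t\<le>jn. x t = 0" "x (Suc jn) = w0 *\<^sub>R E"
    "coef_cost QN Q R N x u = (w0 *\<^sub>R E) \<bullet> (ric_P A B Q R QN (N - Suc jn) *v (w0 *\<^sub>R E))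
        + (\<Sum>t\<in>{Suc jn..<N}. sqc A B Q R QN N x u t)"
proof -
  have x0: "x 0 = 0" using feas unfolding coef_feasible_def xini_def by simp
  have wc: "wcoef EW w0 (int jn) k = (if k = jn then w0 else 0)" for k
    by (simp add: wcoef_def)
  note fe = feas[unfolded coef_feasible_def]
  have d: "\<forall>k<N. x (Suc k) = A *v x k + B *v u k + wcoef EW w0 (int jn) k *\<^sub>R E"
    using fe[THEN conjunct2, THEN conjunct1] .
  have dyn: "x (Suc k) = A *v x k + B *v u k + (if k = jn then w0 else 0) *\<^sub>R E" if "k < N" for k
  proof -
    have "x (Suc k) = A *v x k + B *v u k + wcoef EW w0 (int jn) k *\<^sub>R E" using d that by simp
    then show ?thesis unfolding wc .
  qed
  have uc: "0 \<le> int jn \<longrightarrow> (\<forall>k<N. int k \<le> int jn \<longrightarrow> u k = 0)"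
    using fe[THEN conjunct2, THEN conjunct2] .
  have u0: "u k = 0" if "k \<le> jn" for k
    using uc that \<open>jn < N\<close> by simp
  show z: "\<forall>t\<le>jn. x t = 0"
  proof (intro allI impI)
    fix t assume "t \<le> jn" then show "x t = 0"
    proof (induction t)
      case 0 then show ?case using x0 by simp
    next
      case (Suc t) then show ?case using dyn[of t] u0[of t] \<open>jn < N\<close> by simp
    qed
  qed
  show xs: "x (Suc jn) = w0 *\<^sub>R E" using dyn[of jn] u0[of jn] z \<open>jn < N\<close> by simp
  have dyn2: "x (Suc t) = A *v x t + B *v u t" if "Suc jn \<le> t" "t < N" for t
    using dyn[of t] that by simp
  have c: "x N \<bullet> (QN *v x N) + (\<Sum>t\<in>{Suc jn..<N}. x t \<bullet> (Q *v x t) + u t \<bullet> (R *v u t))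
     = x (Suc jn) \<bullet> (ric_P A B Q R QN (N - Suc jn) *v x (Suc jn)) + (\<Sum>t\<in>{Suc jn..<N}. sqc A B Q R QN N x u t)"
    by (rule ctg[where s="Suc jn" and x=x and u=u and N=N, OF assms(1-3) dyn2]) (use \<open>jn < N\<close> in simp_all)
  have "(\<Sum>k<N. x k \<bullet> (Q *v x k) + u k \<bullet> (R *v u k)) = (\<Sum>k<Suc jn. x k \<bullet> (Q *v x k) + u k \<bullet> (R *v u k)) + (\<Sum>t\<in>{Suc jn..<N}. x t \<bullet> (Q *v x t) + u t \<bullet> (R *v u t))"
    using \<open>jn < N\<close> unfolding lessThan_atLeast0 by (intro sum.atLeastLessThan_concat[symmetric]) auto
  moreover have "(\<Sum>k<Suc jn. x k \<bullet> (Q *v x k) + u k \<bullet> (R *v u k)) = 0"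
    using z u0 by (intro sum.neutral) auto
  ultimately show "coef_cost QN Q R N x u = (w0 *\<^sub>R E) \<bullet> (ric_P A B Q R QN (N - Suc jn) *v (w0 *\<^sub>R E))
        + (\<Sum>t\<in>{Suc jn..<N}. sqc A B Q R QN N x u t)"
    unfolding coef_cost_def using c xs by simp
qed

lemma opt_traj:
  fixes A::"real^'n^'n" and B::"real^'m^'n" and Q QN ::"real^'n^'n" and R::"real^'m^'m"
    and x :: "nat \<Rightarrow> real^'n" and u :: "nat \<Rightarrow> real^'m"
  assumes "psd QN" "psd Q" "pd R" "jn < N"
    and opt: "coef_optimal A B E QN Q R N x2 x1 EW w0 (int jn) x u"
  shows "\<forall>t\<le>jn. x t = 0"
    "\<And>t. jn < t \<Longrightarrow> t \<le> N \<Longrightarrow> x t = Abar A B Q R QN N (int jn + 1) (int t - 1) *v (w0 *\<^sub>R E)"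
proof -
  note op = opt[unfolded coef_optimal_def]
  have feas: "coef_feasible A B E N x2 x1 EW w0 (int jn) x u" using op[THEN conjunct1] .
  note fc = feas_cost[OF assms(1-4) feas]
  show "\<forall>t\<le>jn. x t = 0" using fc(1) .
  define xf where "xf = fbx A B Q R QN N jn w0 E"
  define uf where "uf = (\<lambda>t. if t \<le> jn then 0 else ric_K A B Q R QN (N - t) *v xf t)"
  have fz: "xf t = 0" if "t \<le> jn" for t
    using that by (induction t) (auto simp: xf_def)
  have feasf: "coef_feasible A B E N x2 x1 EW w0 (int jn) xf uf"
    unfolding coef_feasible_def
  proof (intro conjI allI impI)
    show "xf 0 = xini x2 x1 (int jn)" by (simp add: xf_def xini_def)
  next
    fix k assume "k < N"
    show "xf (Suc k) = A *v xf k + B *v uf k + wcoef EW w0 (int jn) k *\<^sub>R E"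
    proof (cases "k \<le> jn")
      case True
      then show ?thesis using fz[OF True] by (auto simp: xf_def uf_def wcoef_def)
    next
      case False
      then have "xf (Suc k) = (A + B ** ric_K A B Q R QN (N - k)) *v xf k" by (simp add: xf_def)
      also have "\<dots> = A *v xf k + B *v uf k" using False
        by (simp add: uf_def matrix_vector_mult_add_rdistrib matrix_vector_mul_assoc)
      finally show ?thesis using False by (simp add: wcoef_def)
    qed
  next
    fix k assume "0 \<le> int jn" "k < N" "int k \<le> int jn"
    then show "uf k = 0" by (simp add: uf_def)
  qed
  have sqf: "sqc A B Q R QN N xf uf t = 0" if "Suc jn \<le> t" for t
    using that unfolding sqc_def uf_def by simp
  have cf: "coef_cost QN Q R N xf uf = (w0 *\<^sub>R E) \<bullet> (ric_P A B Q R QN (N - Suc jn) *v (w0 *\<^sub>R E))"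
    using feas_cost(3)[OF assms(1-4) feasf] sqf by simp
  have le: "coef_cost QN Q R N x u \<le> coef_cost QN Q R N xf uf"
    using op[THEN conjunct2] feasf by blast
  have nn: "0 \<le> sqc A B Q R QN N x u t" for t
    unfolding sqc_def Mm_def using M_inv(2)[OF ric_psd[OF assms(1-3)] assms(3)] psd_def by blast
  have "(\<Sum>t\<in>{Suc jn..<N}. sqc A B Q R QN N x u t) \<le> 0"
    using le cf fc(3) by simp
  then have "(\<Sum>t\<in>{Suc jn..<N}. sqc A B Q R QN N x u t) = 0"
    using nn by (meson order_antisym sum_nonneg)
  then have z: "\<And>t. t \<in> {Suc jn..<N} \<Longrightarrow> sqc A B Q R QN N x u t = 0"
    using nn by (simp add: sum_nonneg_eq_0_iff)
  have fb: "u t = ric_K A B Q R QN (N - t) *v x t" if "Suc jn \<le> t" "t < N" for t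
  proof (rule ccontr)
    assume "u t \<noteq> ric_K A B Q R QN (N - t) *v x t"
    then have "u t - ric_K A B Q R QN (N - t) *v x t \<noteq> 0" by simp
    moreover have "pd (Mm A B Q R QN (N - Suc t))"
      unfolding Mm_def using M_inv(3)[OF ric_psd[OF assms(1-3)] assms(3)] by blast
    ultimately have "0 < sqc A B Q R QN N x u t"
      unfolding sqc_def pd_def by blast
    then show False using z that by simp
  qed
  show "x t = Abar A B Q R QN N (int jn + 1) (int t - 1) *v (w0 *\<^sub>R E)" if "jn < t" "t \<le> N" for t
    using that
  proof (induction t)
    case 0 then show ?case by simp
  next
    case (Suc t)
    show ?case
    proof (cases "t = jn")
      case True then show ?thesis using fc(2) by (simp add: Abar_def)
    next
      case False
      then have "jn < t" using Suc by simp
      then have ih: "x t = Abar A B Q R QN N (int jn + 1) (int t - 1) *v (w0 *\<^sub>R E)" using Suc by simp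
      have "x (Suc t) = A *v x t + B *v u t + wcoef EW w0 (int jn) t *\<^sub>R E"
        using feas[unfolded coef_feasible_def, THEN conjunct2, THEN conjunct1] Suc.prems by simp
      also have "\<dots> = (A + B ** ric_K A B Q R QN (N - t)) *v x t"
        using fb[of t] \<open>jn < t\<close> Suc.prems
        by (simp add: wcoef_def matrix_vector_mult_add_rdistrib matrix_vector_mul_assoc)
      also have "\<dots> = Abar A B Q R QN N (int jn + 1) (int (Suc t) - 1) *v (w0 *\<^sub>R E)"
        using abar_step[of "int jn + 1" "int t" A B Q R QN N] ih \<open>jn < t\<close> Suc.prems
        by (simp add: matrix_vector_mul_assoc nat_diff_distrib)
      finally show ?thesis .
    qed
  qed
qed

theorem lemma2:
  fixes A :: "real^'n^'n" and B :: "real^'m^'n" and E :: "real^'n"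
    and QN Q :: "real^'n^'n" and R :: "real^'m^'m"
    and N p :: nat and x2 x1 :: "real^'n" and EW w0 :: real
    and xs :: "int \<Rightarrow> nat \<Rightarrow> real^'n" and us :: "int \<Rightarrow> nat \<Rightarrow> real^'m"
    and phi :: "int \<Rightarrow> 'w \<Rightarrow> real"
    and Xstar Xtrun :: "nat \<Rightarrow> 'w \<Rightarrow> real^'n"
  assumes "psd QN" and "psd Q" and "pd R"
    and "stabilizable A B" and "detectable A (msqrt Q)"
    and opt: "\<And>j. j \<in> {-2..int N - 1} \<Longrightarrow> coef_optimal A B E QN Q R N x2 x1 EW w0 j (xs j) (us j)"
    and Xstar_def: "\<And>k \<omega>. Xstar k \<omega> = (\<Sum>j\<in>{-2..int N - 1}. phi j \<omega> *\<^sub>R xs j k)"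
    and Xtrun_def: "\<And>k \<omega>. Xtrun k \<omega> =
          (\<Sum>j\<in>{-2,-1} \<union> {max 0 (int k - int p)..int k - 1}. phi j \<omega> *\<^sub>R xs j k)"
    and "k < N"
  shows "Xstar k \<omega> - Xtrun k \<omega> =
     (if k \<le> p then 0
      else (\<Sum>j\<in>{0..int k - int p - 1}.
              phi j \<omega> *\<^sub>R (Abar A B Q R QN N (j + 1) (int k - 1) *v (w0 *\<^sub>R E))))"
proof -
  define g where "g j = phi j \<omega> *\<^sub>R xs j k" for j
  define I where "I = {-2..int N - 1}"
  define S where "S = {-2,-1} \<union> {max 0 (int k - int p)..int k - 1}"
  have SI: "S \<subseteq> I" unfolding S_def I_def using \<open>k < N\<close> by auto
  have diff: "Xstar k \<omega> - Xtrun k \<omega> = sum g (I - S)"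
    unfolding Xstar_def Xtrun_def g_def I_def[symmetric] S_def[symmetric]
    using sum_diff[OF _ SI, of "\<lambda>j. phi j \<omega> *\<^sub>R xs j k"] unfolding I_def by simp
  have IS: "I - S = {0..int k - int p - 1} \<union> {int k..int N - 1}"
    unfolding I_def S_def using \<open>k < N\<close> by auto
  have disj: "{0..int k - int p - 1} \<inter> {int k..int N - 1} = {}" by auto
  have z: "sum g {int k..int N - 1} = 0"
  proof (rule sum.neutral, intro ballI)
    fix j assume j: "j \<in> {int k..int N - 1}"
    define jn where "jn = nat j"
    have jj: "j = int jn" "k \<le> jn" "jn < N" using j jn_def by auto
    have "coef_optimal A B E QN Q R N x2 x1 EW w0 (int jn) (xs (int jn)) (us (int jn))"
      using opt[of "int jn"] jj by auto
    then have "xs (int jn) k = 0" using opt_traj(1)[OF assms(1-3) \<open>jn < N\<close>] jj by blast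
    then show "g j = 0" unfolding g_def jj by simp
  qed
  have a: "g j = phi j \<omega> *\<^sub>R (Abar A B Q R QN N (j + 1) (int k - 1) *v (w0 *\<^sub>R E))"
    if j: "j \<in> {0..int k - int p - 1}" for j
  proof -
    define jn where "jn = nat j"
    have jj: "j = int jn" "jn < k" "jn < N" using j jn_def \<open>k < N\<close> by auto
    have "coef_optimal A B E QN Q R N x2 x1 EW w0 (int jn) (xs (int jn)) (us (int jn))"
      using opt[of "int jn"] jj by auto
    then have "xs (int jn) k = Abar A B Q R QN N (int jn + 1) (int k - 1) *v (w0 *\<^sub>R E)"
      using opt_traj(2)[OF assms(1-3) \<open>jn < N\<close>] jj \<open>k < N\<close> by simp
    then show ?thesis unfolding g_def jj by simp
  qed
  have "Xstar k \<omega> - Xtrun k \<omega> = sum g {0..int k - int p - 1}"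
    using diff IS disj z by (simp add: sum.union_disjoint)
  also have "\<dots> = (\<Sum>j\<in>{0..int k - int p - 1}. phi j \<omega> *\<^sub>R (Abar A B Q R QN N (j + 1) (int k - 1) *v (w0 *\<^sub>R E)))"
    using a by (rule sum.cong[OF refl])
  finally show ?thesis by auto
qed

end
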